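(* Let $n\ge1$ be an integer and let $k\in\mathbb{R}\setminus A_n$. Then there is a unique pair $(a,b)\in\mathbb{R}^2$ with $(a,b)\neq(0,0)$ satisfying both $S^{(a,b)}_{k,n+1}-S^{(a,b)}_{k,n}=-bk+2b-a$ and $4a^3+27b^2=0$; namely $a=-\frac{27(F_n(k)+1)^2}{4(G_n(k)+k-2)^2}$, $b=\frac{27(F_n(k)+1)^3}{4(G_n(k)+k-2)^3}$.
   Context: For real $k,a,b$, the generalized $k$-FL sequence is $S^{(a,b)}_{k,0}=2b$, $S^{(a,b)}_{k,1}=bk+a$, $S^{(a,b)}_{k,m}=kS^{(a,b)}_{k,m-1}+S^{(a,b)}_{k,m-2}$ ($m\ge2$). Define $f_m,g_m\in\mathbb{Z}[T]$ by $f_0=0,f_1=1,g_0=2,g_1=T$, $f_m=Tf_{m-1}+f_{m-2}$, $g_m=Tg_{m-1}+g_{m-2}$, and set $F_n=f_{n+1}-f_n$, $G_n=g_{n+1}-g_n$, so that $S^{(a,b)}_{k,n+1}-S^{(a,b)}_{k,n}=F_n(k)a+G_n(k)b$. Let $A_n=\{k\in\mathbb{R}: F_n(k)+1=0 \text{ or } G_n(k)+k-2=0\}$. *)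

theory Defs
  imports Complex_Main "HOL-Computational_Algebra.Polynomial"
begin

fun S :: "real \<Rightarrow> real \<Rightarrow> real \<Rightarrow> nat \<Rightarrow> real" where
  "S a b k 0 = 2 * b"
| "S a b k (Suc 0) = b * k + a"
| "S a b k (Suc (Suc m)) = k * S a b k (Suc m) + S a b k m"

fun fpoly :: "nat \<Rightarrow> int poly" where
  "fpoly 0 = 0"
| "fpoly (Suc 0) = 1"
| "fpoly (Suc (Suc m)) = [:0, 1:] * fpoly (Suc m) + fpoly m"

fun gpoly :: "nat \<Rightarrow> int poly" where
  "gpoly 0 = [:2:]"
| "gpoly (Suc 0) = [:0, 1:]"
| "gpoly (Suc (Suc m)) = [:0, 1:] * gpoly (Suc m) + gpoly m"

definition Fpoly :: "nat \<Rightarrow> int poly" where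
  "Fpoly n = fpoly (n + 1) - fpoly n"

definition Gpoly :: "nat \<Rightarrow> int poly" where
  "Gpoly n = gpoly (n + 1) - gpoly n"

definition evalR :: "int poly \<Rightarrow> real \<Rightarrow> real" where
  "evalR p k = poly (map_poly of_int p) k"

definition A_set :: "nat \<Rightarrow> real set" where
  "A_set n = {k. evalR (Fpoly n) k + 1 = 0 \<or> evalR (Gpoly n) k + k - 2 = 0}"

end

theory Submission
  imports Defs
begin

lemma mp_add: "map_poly (of_int::int\<Rightarrow>real) (p + q) = map_poly of_int p + map_poly of_int q"
  by (intro poly_eqI) (simp add: coeff_map_poly)
lemma mp_diff: "map_poly (of_int::int\<Rightarrow>real) (p - q) = map_poly of_int p - map_poly of_int q"
  by (intro poly_eqI) (simp add: coeff_map_poly)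
lemma mp_X: "map_poly (of_int::int\<Rightarrow>real) ([:0,1:] * p) = [:0,1:] * map_poly of_int p"
  by (simp add: map_poly_pCons)

lemma S_poly: "S a b k m = evalR (fpoly m) k * a + evalR (gpoly m) k * b"
proof (induction m rule: fpoly.induct)
  case 1 then show ?case by (simp add: evalR_def map_poly_pCons)
next
  case 2 then show ?case by (simp add: evalR_def map_poly_pCons)
next
  case (3 m)
  then show ?case by (simp add: evalR_def mp_add mp_X map_poly_pCons algebra_simps)
qed

lemma S_diff: "S a b k (n+1) - S a b k n = evalR (Fpoly n) k * a + evalR (Gpoly n) k * b"
  by (simp add: S_poly Fpoly_def Gpoly_def evalR_def mp_diff algebra_simps)

theorem lemma3p5:
  fixes n :: nat and k :: real
  assumes "n \<ge> 1" and "k \<notin> A_set n"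
  shows "(\<exists>!p :: real \<times> real. p \<noteq> (0, 0) \<and>
            S (fst p) (snd p) k (n + 1) - S (fst p) (snd p) k n
              = - (snd p) * k + 2 * (snd p) - fst p \<and>
            4 * (fst p) ^ 3 + 27 * (snd p) ^ 2 = 0)
       \<and> (let a = - (27 * (evalR (Fpoly n) k + 1) ^ 2) / (4 * (evalR (Gpoly n) k + k - 2) ^ 2);
              b = (27 * (evalR (Fpoly n) k + 1) ^ 3) / (4 * (evalR (Gpoly n) k + k - 2) ^ 3)
          in (a, b) \<noteq> (0, 0) \<and> S a b k (n + 1) - S a b k n = - b * k + 2 * b - a \<and>
             4 * a ^ 3 + 27 * b ^ 2 = 0)"
proof -
  define P where "P = evalR (Fpoly n) k + 1"
  define Q where "Q = evalR (Gpoly n) k + k - 2"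
  have P: "P \<noteq> 0" and Q: "Q \<noteq> 0" using assms(2) by (auto simp: A_set_def P_def Q_def)
  have eqv: "S a b k (n+1) - S a b k n = - b * k + 2 * b - a \<longleftrightarrow> P * a + Q * b = 0" for a b
    using S_diff[of a b k n] by (simp add: P_def Q_def algebra_simps)
  define a0 where "a0 = - (27 * P ^ 2) / (4 * Q ^ 2)"
  define b0 where "b0 = (27 * P ^ 3) / (4 * Q ^ 3)"
  have char: "((a,b) \<noteq> (0,0) \<and> P * a + Q * b = 0 \<and> 4 * a ^ 3 + 27 * b ^ 2 = 0)
      \<longleftrightarrow> (a = a0 \<and> b = b0)" for a b
  proof
    assume h: "(a,b) \<noteq> (0,0) \<and> P * a + Q * b = 0 \<and> 4 * a ^ 3 + 27 * b ^ 2 = 0"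
    have ha: "a = - Q * b / P" using h P by (simp add: field_simps)
    have b0': "b \<noteq> 0" using h ha by auto
    have "4 * (- Q * b / P) ^ 3 + 27 * b ^ 2 = 0" using h ha by simp
    hence "b^2 * (27 * P^3 - 4 * Q^3 * b) = 0" using P
      by (simp add: field_simps power3_eq_cube power2_eq_square)
    hence "27 * P^3 - 4 * Q^3 * b = 0" using b0' by simp
    hence hb: "b = b0" using Q unfolding b0_def by (simp add: field_simps)
    have e1: "Q^3 * b * 4 = 27 * P^3" using hb Q unfolding b0_def by (simp add: field_simps)
    have e2: "P * a = - Q * b" using ha P by simp
    have "P * (Q^2 * a * 4) = P * (- 27 * P^2)"
    proof -
      have "P * (Q^2 * a * 4) = Q^2 * 4 * (P * a)" by (simp add: algebra_simps)
      also have "\<dots> = Q^2 * 4 * (- Q * b)" using e2 by simp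
      also have "\<dots> = - (Q^3 * b * 4)" by (simp add: power3_eq_cube power2_eq_square)
      also have "\<dots> = P * (- 27 * P^2)" using e1 by (simp add: power3_eq_cube power2_eq_square)
      finally show ?thesis .
    qed
    hence "Q^2 * a * 4 = - 27 * P^2" using P mult_left_cancel by blast
    hence "a = a0" using Q unfolding a0_def by (simp add: field_simps)
    then show "a = a0 \<and> b = b0" using hb by simp
  next
    assume "a = a0 \<and> b = b0"
    then have ab: "a = a0" "b = b0" by auto
    have 1: "b0 \<noteq> 0" using P Q unfolding b0_def by simp
    have 2: "P * a0 + Q * b0 = 0" using P Q unfolding a0_def b0_def
      by (simp add: field_simps power3_eq_cube power2_eq_square)
    have "a0 ^ 3 = - (27^3 * P^6) / (64 * Q^6)" unfolding a0_def
      by (simp add: power_divide power_mult_distrib flip: power_mult)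
    moreover have "b0 ^ 2 = (27^2 * P^6) / (16 * Q^6)" unfolding b0_def
      by (simp add: power_divide power_mult_distrib flip: power_mult)
    ultimately have 3: "4 * a0 ^ 3 + 27 * b0 ^ 2 = 0" by simp
    show "(a,b) \<noteq> (0,0) \<and> P * a + Q * b = 0 \<and> 4 * a ^ 3 + 27 * b ^ 2 = 0"
      using ab 1 2 3 by simp
  qed
  have ex: "\<exists>!p :: real \<times> real. p \<noteq> (0, 0) \<and>
            S (fst p) (snd p) k (n + 1) - S (fst p) (snd p) k n
              = - (snd p) * k + 2 * (snd p) - fst p \<and>
            4 * (fst p) ^ 3 + 27 * (snd p) ^ 2 = 0"
  proof (rule ex1I[of _ "(a0,b0)"])
    show "(a0, b0) \<noteq> (0, 0) \<and> S (fst (a0, b0)) (snd (a0, b0)) k (n + 1) - S (fst (a0, b0)) (snd (a0, b0)) k n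
       = - snd (a0, b0) * k + 2 * snd (a0, b0) - fst (a0, b0) \<and> 4 * fst (a0, b0) ^ 3 + 27 * snd (a0, b0) ^ 2 = 0"
      using char[of a0 b0] eqv[of a0 b0] by simp
  next
    fix p :: "real \<times> real"
    assume "p \<noteq> (0, 0) \<and> S (fst p) (snd p) k (n + 1) - S (fst p) (snd p) k n
              = - (snd p) * k + 2 * (snd p) - fst p \<and> 4 * (fst p) ^ 3 + 27 * (snd p) ^ 2 = 0"
    then show "p = (a0, b0)" using char[of "fst p" "snd p"] eqv[of "fst p" "snd p"]
      by (cases p) auto
  qed
  show ?thesis
    using ex char[of a0 b0] eqv[of a0 b0] unfolding Let_def a0_def b0_def P_def Q_def by simp
qed

end
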